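(* Let $\alpha:\mathbb{C}\to\mathbb{C}$ be an exponential automorphism, i.e. a function satisfying $\alpha(z_1+z_2)=\alpha(z_1)+\alpha(z_2)$ and $\alpha(e^z)=e^{\alpha(z)}$ for all $z,z_1,z_2\in\mathbb{C}$. Then for every positive rational number $t$ there is an integer $n=n(\alpha,t)$ such that $\alpha(\ln t)=\ln t+2\pi n i$.
   Context: Here $\ln t$ denotes the usual real-valued natural logarithm of the positive real number $t$. *)

theory Defs
  imports Complex_Main
begin

definition exp_automorphism :: "(complex \<Rightarrow> complex) \<Rightarrow> bool" where
  "exp_automorphism \<alpha> \<longleftrightarrow>
     (\<forall>z1 z2. \<alpha> (z1 + z2) = \<alpha> z1 + \<alpha> z2) \<and> (\<forall>z. \<alpha> (exp z) = exp (\<alpha> z))"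

end

theory Submission
  imports Defs "HOL-Analysis.Analysis"
begin

lemma add_hom_nat:
  assumes add: "\<And>a b. f (a + b) = f a + (f b :: complex)"
  shows "f (of_nat n * x) = of_nat n * f x"
proof (induction n)
  case 0
  have "f 0 = f 0 + f 0" using add[of 0 0] by simp
  then show ?case by simp
next
  case (Suc n)
  then show ?case using add[of "of_nat n * x" x] by (simp add: algebra_simps)
qed

lemma add_hom_int:
  assumes add: "\<And>a b. f (a + b) = f a + (f b :: complex)"
  shows "f (of_int k * x) = of_int k * f x"
proof (cases "k \<ge> 0")
  case True
  then obtain n where "k = int n" by (metis nonneg_eq_int)
  then show ?thesis using add_hom_nat[OF add, of n x] by simp
next
  case False
  then obtain n where k: "k = - int n" by (metis minus_minus neg_0_le_iff_le nonneg_eq_int linorder_le_cases)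
  have f0: "f 0 = 0" using add[of 0 0] by simp
  have "f (of_nat n * x) + f (- (of_nat n * x)) = 0"
    using add[of "of_nat n * x" "- (of_nat n * x)"] f0 by simp
  moreover have "of_int k * x = - (of_nat n * x)" using k by simp
  moreover have "f (- (of_nat n * x)) = - (of_nat n * f x)"
    using calculation(1) add_hom_nat[OF add, of n x] by (simp add: eq_neg_iff_add_eq_0 add.commute)
  ultimately show ?thesis using k by simp
qed

theorem mainTheorem2:
  fixes \<alpha> :: "complex \<Rightarrow> complex" and t :: real
  assumes "exp_automorphism \<alpha>"
    and "t \<in> \<rat>" and "t > 0"
  shows "\<exists>n::int. \<alpha> (complex_of_real (ln t)) = complex_of_real (ln t) + 2 * pi * of_int n * \<i>"
proof -
  have add: "\<And>a b. \<alpha> (a + b) = \<alpha> a + \<alpha> b" and ex: "\<And>z. \<alpha> (exp z) = exp (\<alpha> z)"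
    using assms(1) unfolding exp_automorphism_def by auto
  have f0: "\<alpha> 0 = 0" using add[of 0 0] by simp
  have f1: "\<alpha> 1 = 1" using ex[of 0] f0 by simp
  have fint: "\<alpha> (of_int k) = of_int k" for k
    using add_hom_int[OF add, of k 1] f1 by simp
  obtain r where r: "t = of_rat r" using assms(2) Rats_cases by blast
  obtain a b where ab: "r = Fract a b" "b > 0" by (cases r) auto
  have t: "complex_of_real t = of_int a / of_int b"
    using r ab by (simp add: of_rat_rat)
  have "of_int b * \<alpha> (of_int a / of_int b) = \<alpha> (of_int b * (of_int a / of_int b))"
    using add_hom_int[OF add, of b "of_int a / of_int b"] by simp
  also have "\<dots> = of_int a" using ab(2) fint by simp
  finally have "\<alpha> (of_int a / of_int b) = of_int a / of_int b" using ab(2) by (simp add: field_simps)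
  then have "\<alpha> (complex_of_real t) = complex_of_real t"
    using t by simp
  moreover have "exp (complex_of_real (ln t)) = complex_of_real t"
    using assms(3) exp_of_real[of "ln t"] by simp
  ultimately have "exp (\<alpha> (complex_of_real (ln t))) = exp (complex_of_real (ln t))"
    using ex by metis
  then obtain n :: int where "\<alpha> (complex_of_real (ln t)) = complex_of_real (ln t) + complex_of_real (real_of_int (2 * n) * pi) * \<i>"
    using exp_eq by blast
  then show ?thesis by (intro exI[of _ n]) (simp add: algebra_simps)
qed

end
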